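(* For positive integers $m\le n$, the complete bipartite graph $K_{m,n}$ satisfies $IDI(K_{m,n})=n$ if $m<n$, and $IDI(K_{m,n})=n+1$ if $m=n$.
   Context: For a finite simple connected graph $G=(V,E)$ with diameter $d$, a rank assignment is a function $f:V\to\mathbb{R}$; under $f$, the string of a vertex $v$ is the $d$-vector whose $i$-th coordinate is the sum of $f(w)$ over all vertices $w$ with $d(v,w)=i$. The ID-index $IDI(G)$ is the minimum $k$ such that there exists $f:V\to\mathbb{R}$ with $|f(V)|=k$ under which all vertices have distinct strings. *)

theory Defs
  imports Complex_Main
begin

text \<open>A graph is given by a finite vertex set V and a symmetric irreflexive
adjacency relation E (only its restriction to V matters).\<close>

fun walk_len :: "'a set \<Rightarrow> ('a \<Rightarrow> 'a \<Rightarrow> bool) \<Rightarrow> nat \<Rightarrow> 'a \<Rightarrow> 'a \<Rightarrow> bool" where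
  "walk_len V E 0 u v = (u \<in> V \<and> u = v)"
| "walk_len V E (Suc k) u v = (u \<in> V \<and> (\<exists>w\<in>V. E u w \<and> walk_len V E k w v))"

definition gdist :: "'a set \<Rightarrow> ('a \<Rightarrow> 'a \<Rightarrow> bool) \<Rightarrow> 'a \<Rightarrow> 'a \<Rightarrow> nat" where
  "gdist V E u v = (LEAST k. walk_len V E k u v)"

definition diameter :: "'a set \<Rightarrow> ('a \<Rightarrow> 'a \<Rightarrow> bool) \<Rightarrow> nat" where
  "diameter V E = Max {gdist V E u v | u v. u \<in> V \<and> v \<in> V}"

definition vstring :: "'a set \<Rightarrow> ('a \<Rightarrow> 'a \<Rightarrow> bool) \<Rightarrow> ('a \<Rightarrow> real) \<Rightarrow> 'a \<Rightarrow> real list" where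
  "vstring V E f v = map (\<lambda>i. \<Sum>w\<in>{w\<in>V. gdist V E v w = i}. f w) [1..<diameter V E + 1]"

definition IDI :: "'a set \<Rightarrow> ('a \<Rightarrow> 'a \<Rightarrow> bool) \<Rightarrow> nat" where
  "IDI V E = (LEAST k. \<exists>f :: 'a \<Rightarrow> real. card (f ` V) = k \<and> inj_on (vstring V E f) V)"

definition Kbip_V :: "nat \<Rightarrow> nat \<Rightarrow> (nat + nat) set" where
  "Kbip_V m n = Inl ` {..<m} \<union> Inr ` {..<n}"

definition Kbip_E :: "(nat + nat) \<Rightarrow> (nat + nat) \<Rightarrow> bool" where
  "Kbip_E x y = (isl x \<noteq> isl y)"

end

theory Submission
  imports Defs
begin

lemma memV: "u \<in> Kbip_V m n \<longleftrightarrow> (case u of Inl i \<Rightarrow> i < m | Inr j \<Rightarrow> j < n)"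
  unfolding Kbip_V_def by (cases u) auto

lemma finV: "finite (Kbip_V m n)"
  unfolding Kbip_V_def by auto

lemma gdist_K:
  assumes "0 < m" "0 < n" "u \<in> Kbip_V m n" "v \<in> Kbip_V m n"
  shows "gdist (Kbip_V m n) Kbip_E u v = (if u = v then 0 else if isl u \<noteq> isl v then 1 else 2)"
proof -
  let ?V = "Kbip_V m n"
  have w: "\<exists>w\<in>?V. isl w \<noteq> isl u"
  proof (cases "isl u")
    case True
    then show ?thesis using assms by (intro bexI[of _ "Inr 0"]) (auto simp: Kbip_V_def)
  next
    case False
    then show ?thesis using assms by (intro bexI[of _ "Inl 0"]) (auto simp: Kbip_V_def)
  qed
  show ?thesis
  proof (cases "u = v")
    case True
    then show ?thesis unfolding gdist_def using assms by (intro Least_equality) auto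
  next
    case ne: False
    show ?thesis
    proof (cases "isl u \<noteq> isl v")
      case True
      have "(LEAST k. walk_len ?V Kbip_E k u v) = 1"
      proof (rule Least_equality)
        show "walk_len ?V Kbip_E 1 u v" using assms True by (auto simp: Kbip_E_def)
        show "\<And>y. walk_len ?V Kbip_E y u v \<Longrightarrow> 1 \<le> y" using ne
          by (case_tac y) auto
      qed
      then show ?thesis using ne True unfolding gdist_def by simp
    next
      case False
      have "(LEAST k. walk_len ?V Kbip_E k u v) = 2"
      proof (rule Least_equality)
        show "walk_len ?V Kbip_E 2 u v" using assms False w
          by (auto simp: Kbip_E_def numeral_2_eq_2)
        show "\<And>y. walk_len ?V Kbip_E y u v \<Longrightarrow> 2 \<le> y" using ne False
        proof -
          fix y assume "walk_len ?V Kbip_E y u v"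
          then show "2 \<le> y" using ne False
            by (cases y; cases "y - 1") (auto simp: Kbip_E_def)
        qed
      qed
      then show ?thesis using ne False unfolding gdist_def by simp
    qed
  qed
qed

lemma diam_K:
  assumes "0 < m" "m \<le> n"
  shows "diameter (Kbip_V m n) Kbip_E = (if 2 \<le> n then 2 else 1)"
proof -
  let ?V = "Kbip_V m n"
  let ?S = "{gdist ?V Kbip_E u v | u v. u \<in> ?V \<and> v \<in> ?V}"
  have n0: "0 < n" using assms by simp
  have g3: "gdist ?V Kbip_E u v \<in> {0,1,2}" if "u \<in> ?V" "v \<in> ?V" for u v
  proof -
    have e: "gdist ?V Kbip_E u v = (if u = v then 0 else if isl u \<noteq> isl v then 1 else 2)"
      by (rule gdist_K[OF assms(1) n0 that])
    show ?thesis unfolding e by auto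
  qed
  have dS: "diameter ?V Kbip_E = Max ?S" unfolding diameter_def by (rule refl)
  have sub: "?S \<subseteq> {0,1,2}"
  proof
    fix x assume "x \<in> ?S"
    then obtain u v where "x = gdist ?V Kbip_E u v" "u \<in> ?V" "v \<in> ?V" by blast
    then show "x \<in> {0,1,2}" using g3 by simp
  qed
  have fin: "finite ?S" by (rule finite_subset[OF sub]) simp
  have one: "1 \<in> ?S"
  proof -
    have "Inl 0 \<in> ?V" "Inr 0 \<in> ?V" using assms by (auto simp: Kbip_V_def)
    moreover have "1 = gdist ?V Kbip_E (Inl 0) (Inr 0)"
      using gdist_K[OF assms(1) n0 calculation] by simp
    ultimately show ?thesis by blast
  qed
  show ?thesis
  proof (cases "2 \<le> n")
    case True
    have "Inr 0 \<in> ?V" "Inr 1 \<in> ?V" using True by (auto simp: Kbip_V_def)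
    moreover have "2 = gdist ?V Kbip_E (Inr 0) (Inr 1)"
      using gdist_K[OF assms(1) n0 calculation] by simp
    ultimately have two: "2 \<in> ?S" by blast
    have "Max ?S = 2"
    proof (rule Max_eqI[OF fin])
      fix y assume "y \<in> ?S" then have "y \<in> {0,1,2}" using sub by (rule subsetD[rotated])
      then show "y \<le> 2" by auto
    qed (rule two)
    then show ?thesis using True dS by simp
  next
    case False
    then have "n = 1" "m = 1" using assms by linarith+
    have g2: "gdist ?V Kbip_E u v \<in> {0,1}" if "u \<in> ?V" "v \<in> ?V" for u v
    proof -
      have e: "gdist ?V Kbip_E u v = (if u = v then 0 else if isl u \<noteq> isl v then 1 else 2)"
        by (rule gdist_K[OF assms(1) n0 that])
      have "u = Inl 0 \<or> u = Inr 0" "v = Inl 0 \<or> v = Inr 0"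
        using that \<open>n = 1\<close> \<open>m = 1\<close> by (auto simp: Kbip_V_def)
      then show ?thesis unfolding e by auto
    qed
    have sub2: "?S \<subseteq> {0,1}"
    proof
      fix x assume "x \<in> ?S"
      then obtain u v where "x = gdist ?V Kbip_E u v" "u \<in> ?V" "v \<in> ?V" by blast
      then show "x \<in> {0,1}" using g2 by simp
    qed
    have "Max ?S = 1"
    proof (rule Max_eqI[OF fin])
      fix y assume "y \<in> ?S" then have "y \<in> {0,1}" using sub2 by (rule subsetD[rotated])
      then show "y \<le> 1" by auto
    qed (rule one)
    then show ?thesis using False dS by simp
  qed
qed

definition SA :: "((nat + nat) \<Rightarrow> real) \<Rightarrow> nat \<Rightarrow> real" where
  "SA f m = sum f (Inl ` {..<m})"
definition SB :: "((nat + nat) \<Rightarrow> real) \<Rightarrow> nat \<Rightarrow> real" where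
  "SB f n = sum f (Inr ` {..<n})"

lemma vstring_K:
  assumes "0 < m" "m \<le> n" "u \<in> Kbip_V m n"
  shows "vstring (Kbip_V m n) Kbip_E f u =
    (if 2 \<le> n then [if isl u then SB f n else SA f m, (if isl u then SA f m else SB f n) - f u]
     else [if isl u then SB f n else SA f m])"
proof -
  let ?V = "Kbip_V m n"
  have n0: "0 < n" using assms by simp
  have h1: "{w\<in>?V. gdist ?V Kbip_E u w = 1} = (if isl u then Inr ` {..<n} else Inl ` {..<m})" (is "_ = ?R1")
  proof (rule set_eqI)
    fix w show "w \<in> {w\<in>?V. gdist ?V Kbip_E u w = 1} \<longleftrightarrow> w \<in> ?R1"
      using gdist_K[OF assms(1) n0 assms(3), of w] assms(3) by (cases u; cases w) (auto simp: memV split: if_splits)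
  qed
  have h2: "{w\<in>?V. gdist ?V Kbip_E u w = 2} = (if isl u then Inl ` {..<m} else Inr ` {..<n}) - {u}" (is "_ = ?R2")
  proof (rule set_eqI)
    fix w show "w \<in> {w\<in>?V. gdist ?V Kbip_E u w = 2} \<longleftrightarrow> w \<in> ?R2"
      using gdist_K[OF assms(1) n0 assms(3), of w] assms(3) by (cases u; cases w) (auto simp: memV split: if_splits)
  qed
  have s2: "sum f ((if isl u then Inl ` {..<m} else Inr ` {..<n}) - {u}) =
      (if isl u then SA f m else SB f n) - f u"
    using assms(3) by (auto simp: SA_def SB_def sum_diff1 memV split: sum.splits)
  have up: "[1..<diameter ?V Kbip_E + 1] = (if 2 \<le> n then [1,2] else [1])"
    unfolding diam_K[OF assms(1,2)] by (simp add: upt_rec)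
  have s1: "sum f (if isl u then Inr ` {..<n} else Inl ` {..<m}) = (if isl u then SB f n else SA f m)"
    by (simp add: SA_def SB_def)
  have "vstring ?V Kbip_E f u = (if 2 \<le> n then [sum f {w\<in>?V. gdist ?V Kbip_E u w = 1},
       sum f {w\<in>?V. gdist ?V Kbip_E u w = 2}] else [sum f {w\<in>?V. gdist ?V Kbip_E u w = 1}])"
    unfolding vstring_def up by simp
  then show ?thesis by (simp only: h1 h2 s1 s2)
qed


lemma same_side_eq:
  assumes "0 < m" "m \<le> n" "u \<in> Kbip_V m n" "v \<in> Kbip_V m n" "isl u = isl v" "f u = f v"
  shows "vstring (Kbip_V m n) Kbip_E f u = vstring (Kbip_V m n) Kbip_E f v"
  using vstring_K[OF assms(1,2,3), of f] vstring_K[OF assms(1,2,4), of f] assms(5,6) by simp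

lemma hd_vstring:
  assumes "0 < m" "m \<le> n" "u \<in> Kbip_V m n"
  shows "hd (vstring (Kbip_V m n) Kbip_E f u) = (if isl u then SB f n else SA f m)"
  using vstring_K[OF assms, of f] by simp

lemma sideA: "u \<in> Kbip_V m n \<Longrightarrow> isl u \<Longrightarrow> u \<in> Inl ` {..<m}"
  by (cases u) (auto simp: memV)
lemma sideB: "u \<in> Kbip_V m n \<Longrightarrow> \<not> isl u \<Longrightarrow> u \<in> Inr ` {..<n}"
  by (cases u) (auto simp: memV)
lemma subA: "Inl ` {..<m} \<subseteq> Kbip_V m n" by (auto simp: Kbip_V_def)
lemma subB: "Inr ` {..<n} \<subseteq> Kbip_V m n" by (auto simp: Kbip_V_def)

lemma inj_upper:
  assumes "0 < m" "m \<le> n" "SA f m \<noteq> SB f n"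
    "inj_on f (Inl ` {..<m})" "inj_on f (Inr ` {..<n})"
  shows "inj_on (vstring (Kbip_V m n) Kbip_E f) (Kbip_V m n)"
proof (rule inj_onI)
  fix u v assume u: "u \<in> Kbip_V m n" and v: "v \<in> Kbip_V m n"
    and eq: "vstring (Kbip_V m n) Kbip_E f u = vstring (Kbip_V m n) Kbip_E f v"
  have "(if isl u then SB f n else SA f m) = (if isl v then SB f n else SA f m)"
    using hd_vstring[OF assms(1,2) u, of f] hd_vstring[OF assms(1,2) v, of f] eq by simp
  then have isl: "isl u = isl v" using assms(3) by (auto split: if_splits)
  show "u = v"
  proof (cases "2 \<le> n")
    case True
    have "vstring (Kbip_V m n) Kbip_E f u ! 1 = vstring (Kbip_V m n) Kbip_E f v ! 1"
      using eq by simp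
    then have "f u = f v"
      using vstring_K[OF assms(1,2) u, of f] vstring_K[OF assms(1,2) v, of f] True isl by simp
    then show ?thesis
    proof (cases "isl u")
      case True
      then show ?thesis using sideA[OF u] sideA[OF v] isl \<open>f u = f v\<close> assms(4)
        by (auto dest: inj_onD)
    next
      case False
      then show ?thesis using sideB[OF u] sideB[OF v] isl \<open>f u = f v\<close> assms(5)
        by (auto dest: inj_onD)
    qed
  next
    case False
    then have "n = 1" "m = 1" using assms by linarith+
    then show ?thesis using u v isl by (cases u; cases v) (auto simp: memV)
  qed
qed

lemma inj_lower:
  assumes "0 < m" "m \<le> n" "inj_on (vstring (Kbip_V m n) Kbip_E f) (Kbip_V m n)"
  shows "inj_on f (Inl ` {..<m})" "inj_on f (Inr ` {..<n})"
proof -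
  show "inj_on f (Inl ` {..<m})"
  proof (rule inj_onI)
    fix x y assume x: "x \<in> Inl ` {..<m}" and y: "y \<in> Inl ` {..<m}" and e: "f x = f y"
    have "x \<in> Kbip_V m n" "y \<in> Kbip_V m n" using x y subA by blast+
    moreover have "isl x = isl y" using x y by auto
    ultimately show "x = y" using same_side_eq[OF assms(1,2) _ _ _ e] assms(3)
      by (auto dest: inj_onD)
  qed
  show "inj_on f (Inr ` {..<n})"
  proof (rule inj_onI)
    fix x y assume x: "x \<in> Inr ` {..<n}" and y: "y \<in> Inr ` {..<n}" and e: "f x = f y"
    have "x \<in> Kbip_V m n" "y \<in> Kbip_V m n" using x y subB by blast+
    moreover have "isl x = isl y" using x y by auto
    ultimately show "x = y" using same_side_eq[OF assms(1,2) _ _ _ e] assms(3)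
      by (auto dest: inj_onD)
  qed
qed

lemma card_side: "card (f ` (Inr ` {..<n})) = n" if "inj_on f (Inr ` {..<n})"
  using that by (simp add: card_image inj_on_def)
lemma card_sideA: "card (f ` (Inl ` {..<m})) = m" if "inj_on f (Inl ` {..<m})"
  using that by (simp add: card_image inj_on_def)


lemma lower_bound:
  assumes "0 < m" "m \<le> n" "inj_on (vstring (Kbip_V m n) Kbip_E f) (Kbip_V m n)"
  shows "(if m < n then n else n + 1) \<le> card (f ` Kbip_V m n)"
proof -
  let ?V = "Kbip_V m n" let ?A = "Inl ` {..<m}" let ?B = "Inr ` {..<n}"
  note ij = inj_lower[OF assms]
  have fin: "finite (f ` ?V)" using finV by simp
  have cB: "card (f ` ?B) = n" by (rule card_side[OF ij(2)])
  have cA: "card (f ` ?A) = m" by (rule card_sideA[OF ij(1)])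
  have sB: "f ` ?B \<subseteq> f ` ?V" by (rule image_mono[OF subB])
  have sA: "f ` ?A \<subseteq> f ` ?V" by (rule image_mono[OF subA])
  have geB: "n \<le> card (f ` ?V)" using card_mono[OF fin sB] cB by simp
  show ?thesis
  proof (cases "m < n")
    case True then show ?thesis using geB by simp
  next
    case False
    then have mn: "m = n" using assms by simp
    show ?thesis
    proof (rule ccontr)
      assume "\<not> ?thesis"
      then have c: "card (f ` ?V) = n" using geB False by simp
      have eB: "f ` ?B = f ` ?V" using card_subset_eq[OF fin sB] cB c by simp
      have eA: "f ` ?A = f ` ?V" using card_subset_eq[OF fin sA] cA c mn by simp
      have "SA f m = sum id (f ` ?A)" unfolding SA_def using sum.reindex[OF ij(1), of id] by simp
      also have "\<dots> = sum id (f ` ?B)" using eA eB by simp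
      also have "\<dots> = SB f n" unfolding SB_def using sum.reindex[OF ij(2), of id] by simp
      finally have S: "SA f m = SB f n" .
      have a: "Inl 0 \<in> ?V" using assms by (auto simp: Kbip_V_def)
      then have "f (Inl 0) \<in> f ` ?B" using eB by blast
      then obtain b where bq: "f (Inl 0) = f b" and b1: "b \<in> ?B" by (rule imageE)
      have b: "b \<in> ?B" "f b = f (Inl 0)" using bq b1 by simp_all
      have bV: "b \<in> ?V" using b subB by blast
      have nb: "\<not> isl b" using b by auto
      have va: "vstring ?V Kbip_E f (Inl 0) = (if 2 \<le> n then [SB f n, SA f m - f (Inl 0)] else [SB f n])"
        using vstring_K[OF assms(1,2) a, of f] by simp
      have vb: "vstring ?V Kbip_E f b = (if 2 \<le> n then [SA f m, SB f n - f b] else [SA f m])"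
        using vstring_K[OF assms(1,2) bV, of f] nb by simp
      have "vstring ?V Kbip_E f (Inl 0) = vstring ?V Kbip_E f b"
        unfolding va vb S b(2) by (rule refl)
      then have "Inl 0 = b" by (rule inj_onD[OF assms(3) _ a bV])
      then have "isl b" by (metis sum.disc(1))
      then show False using nb by simp
    qed
  qed
qed


definition gK :: "nat + nat \<Rightarrow> nat" where "gK x = (case x of Inl i \<Rightarrow> i | Inr j \<Rightarrow> j)"
definition hK :: "nat + nat \<Rightarrow> nat" where "hK x = (case x of Inl i \<Rightarrow> i | Inr j \<Rightarrow> Suc j)"

lemma upper_lt:
  assumes "0 < m" "m < n"
  shows "\<exists>f :: nat + nat \<Rightarrow> real. card (f ` Kbip_V m n) = n \<and> inj_on (vstring (Kbip_V m n) Kbip_E f) (Kbip_V m n)"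
proof -
  define f :: "nat + nat \<Rightarrow> real" where "f x = real (gK x) + 1" for x
  have g1: "gK ` Inl ` {..<m} = {..<m}" by (force simp: gK_def image_image)
  have g2: "gK ` Inr ` {..<n} = {..<n}" by (force simp: gK_def image_image)
  have gV: "gK ` Kbip_V m n = {..<n}"
    unfolding Kbip_V_def image_Un g1 g2 using assms(2) by auto
  have fV: "f ` Kbip_V m n = (\<lambda>k. real k + 1) ` {..<n}"
    unfolding gV[symmetric] image_image f_def by (rule refl)
  have c: "card (f ` Kbip_V m n) = n"
    unfolding fV by (subst card_image) (auto simp: inj_on_def)
  have iA: "inj_on f (Inl ` {..<m})" by (auto simp: inj_on_def f_def gK_def)
  have iB: "inj_on f (Inr ` {..<n})" by (auto simp: inj_on_def f_def gK_def)
  have sA: "SA f m = (\<Sum>i<m. real i + 1)" unfolding SA_def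
    by (subst sum.reindex) (auto simp: f_def gK_def)
  have sB: "SB f n = (\<Sum>i<n. real i + 1)" unfolding SB_def
    by (subst sum.reindex) (auto simp: f_def gK_def)
  have sub: "{..<m} \<subseteq> {..<n}" using assms by auto
  have "(\<Sum>i<n. real i + 1) = (\<Sum>i\<in>{..<n} - {..<m}. real i + 1) + (\<Sum>i<m. real i + 1)"
    by (rule sum.subset_diff[OF sub]) simp
  moreover have "(\<Sum>i\<in>{..<n} - {..<m}. real i + 1) > 0"
  proof (rule sum_pos)
    show "{..<n} - {..<m} \<noteq> {}" using assms by auto
  qed auto
  ultimately have "SA f m \<noteq> SB f n" using sA sB by simp
  then have "inj_on (vstring (Kbip_V m n) Kbip_E f) (Kbip_V m n)"
    using inj_upper[OF assms(1) _ _ iA iB] assms(2) by simp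
  then show ?thesis using c by blast
qed

lemma upper_eq:
  assumes "0 < n"
  shows "\<exists>f :: nat + nat \<Rightarrow> real. card (f ` Kbip_V n n) = n + 1 \<and> inj_on (vstring (Kbip_V n n) Kbip_E f) (Kbip_V n n)"
proof -
  define f :: "nat + nat \<Rightarrow> real" where "f x = real (hK x)" for x
  have g1: "hK ` Inl ` {..<n} = {..<n}" by (force simp: hK_def image_image)
  have g2: "hK ` Inr ` {..<n} = Suc ` {..<n}" by (force simp: hK_def image_image)
  have u: "{..<n} \<union> Suc ` {..<n} = {..n}"
  proof (rule set_eqI)
    fix x show "x \<in> {..<n} \<union> Suc ` {..<n} \<longleftrightarrow> x \<in> {..n}"
    proof
      assume "x \<in> {..n}"
      then show "x \<in> {..<n} \<union> Suc ` {..<n}"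
      proof (cases "x < n")
        case False
        then have "x = Suc (n - 1)" "n - 1 < n" using \<open>x \<in> {..n}\<close> assms by auto
        then show ?thesis by blast
      qed simp
    qed auto
  qed
  have gV: "hK ` Kbip_V n n = {..n}"
    unfolding Kbip_V_def image_Un g1 g2 u by (rule refl)
  have fV: "f ` Kbip_V n n = real ` {..n}"
    unfolding gV[symmetric] image_image f_def by (rule refl)
  have c: "card (f ` Kbip_V n n) = n + 1"
    unfolding fV by (subst card_image) (auto simp: inj_on_def)
  have iA: "inj_on f (Inl ` {..<n})" by (auto simp: inj_on_def f_def hK_def)
  have iB: "inj_on f (Inr ` {..<n})" by (auto simp: inj_on_def f_def hK_def)
  have sA: "SA f n = (\<Sum>i<n. real i)" unfolding SA_def
    by (subst sum.reindex) (auto simp: f_def hK_def)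
  have sB: "SB f n = (\<Sum>i<n. real i + 1)" unfolding SB_def
    by (subst sum.reindex) (auto simp: f_def hK_def add.commute)
  have "(\<Sum>i<n. real i + 1) = (\<Sum>i<n. real i) + real n" by (simp add: sum.distrib)
  then have "SA f n \<noteq> SB f n" using sA sB assms by simp
  then have "inj_on (vstring (Kbip_V n n) Kbip_E f) (Kbip_V n n)"
    using inj_upper[OF assms _ _ iA iB] by simp
  then show ?thesis using c by blast
qed

theorem mainTheorem13:
  fixes m n :: nat
  assumes "0 < m" and "m \<le> n"
  shows "IDI (Kbip_V m n) Kbip_E = (if m < n then n else n + 1)"
  unfolding IDI_def
proof (rule Least_equality)
  show "\<exists>f :: nat + nat \<Rightarrow> real. card (f ` Kbip_V m n) = (if m < n then n else n + 1) \<and>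
      inj_on (vstring (Kbip_V m n) Kbip_E f) (Kbip_V m n)"
  proof (cases "m < n")
    case True
    then show ?thesis using upper_lt[OF assms(1) True] by simp
  next
    case False
    then have "m = n" using assms by simp
    then show ?thesis using upper_eq[of n] assms False by simp
  qed
next
  fix y assume "\<exists>f :: nat + nat \<Rightarrow> real. card (f ` Kbip_V m n) = y \<and>
      inj_on (vstring (Kbip_V m n) Kbip_E f) (Kbip_V m n)"
  then obtain f :: "nat + nat \<Rightarrow> real" where "card (f ` Kbip_V m n) = y"
      and i: "inj_on (vstring (Kbip_V m n) Kbip_E f) (Kbip_V m n)" by blast
  then show "(if m < n then n else n + 1) \<le> y" using lower_bound[OF assms i] by simp
qed

end
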